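(* Let $k\geq1$, $n\geq2k$, let $\mathcal{S},\mathcal{T}$ be antichains in $\mathcal{F}_{2k}^{[1,n]}$ with $\mathcal{T}\prec_p\mathcal{S}$, let $j\geq1$, and for $i\geq1$ let $$D_i:=\Big(B\big(\mathcal{S}([i,i+1]),i+2\big)\setminus B\big(\mathcal{T}([i,i+1]),i+2\big)\Big)*\overline{[i,i+1]}.$$ If $D_{j+1}$ is not the void complex, then $$D_j\cap D_{j+1}=\Big(B\big(\mathcal{S}([j+1,j+2]),j+2\big)\setminus B\big(\mathcal{T}([j,j+1]),j+2\big)\Big)*\overline{\{j+1\}}.$$
   Context: Notation: $[m,n]=\{m,\dots,n\}$; $d$-subsets of $[n]$ are identified with increasing vectors; $G\leq_p F$ means componentwise $\leq$ and $G\prec_p F$ means $G\leq_p F-\mathbf{1}_d$ ($\mathbf{1}_d$ the all-ones vector). For $r\geq1$, $\mathcal{F}_{2r}^{[m,n]}$ is the set of sets $\{i_1,i_1+1,\dots,i_r,i_r+1\}$ with $m\leq i_1$, $i_r\leq n-1$, $i_j\leq i_{j+1}-2$, ordered by $\leq_p$; $\mathcal{F}_0^{[m,n]}=\{\emptyset\}$. For antichains, $\mathcal{T}\prec_p\mathcal{S}$ means every $G\in\mathcal{T}$ satisfies $G\prec_p F$ for some $F\in\mathcal{S}$. $\mathcal{F}_{2r}(\mathcal{S})$ is the order ideal generated by $\mathcal{S}$. For $1\leq\ell\leq k$ and $J=[j,j+2\ell-1]$, $\mathcal{S}(J)\subseteq\mathcal{F}_{2(k-\ell)}^{[1,n]}$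 is the set of maximal elements of $\{H\in\mathcal{F}_{2(k-\ell)}^{[1,n]}: H\subseteq[j+2\ell,n],\ J\cup H\in\mathcal{F}(\mathcal{S})\}$. $B(\mathcal{S}(J),m)$ is the pure simplicial complex whose facets are the sets of $\mathcal{F}_{2(k-\ell)}(\mathcal{S}(J))\cap\mathcal{F}_{2(k-\ell)}^{[m,n]}$. For pure complexes $X,Y$, $X\setminus Y$ is the complex generated by the facets of $X$ that are not facets of $Y$. $\overline{V}$ is the full simplex on $V$, $*$ is the join (join with the void complex is void). *)

theory Defs
  imports Main
begin

text \<open>d-subsets of [n] are finite sets of naturals; their increasing vector is
  sorted_list_of_set. Simplicial complexes are sets of faces (nat set set);
  the void complex is the empty set of faces.\<close>

definition le_p :: "nat set \<Rightarrow> nat set \<Rightarrow> bool" where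
  "le_p G F \<longleftrightarrow> card G = card F \<and>
     (\<forall>i<card G. sorted_list_of_set G ! i \<le> sorted_list_of_set F ! i)"

text \<open>G \<prec>_p F iff G \<le> F - 1 componentwise (integer arithmetic).\<close>
definition prec_p :: "nat set \<Rightarrow> nat set \<Rightarrow> bool" where
  "prec_p G F \<longleftrightarrow> card G = card F \<and>
     (\<forall>i<card G. sorted_list_of_set G ! i + 1 \<le> sorted_list_of_set F ! i)"

text \<open>pairfam r m n = F_{2r}^{[m,n]}\<close>
definition pairfam :: "nat \<Rightarrow> nat \<Rightarrow> nat \<Rightarrow> nat set set" where
  "pairfam r m n = {(\<Union>j<r. {f j, Suc (f j)}) | f.
      (0 < r \<longrightarrow> m \<le> f 0 \<and> f (r - 1) + 1 \<le> n) \<and>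
      (\<forall>j. j + 1 < r \<longrightarrow> f j + 2 \<le> f (j + 1))}"

definition antichain_in :: "nat set set \<Rightarrow> nat set set \<Rightarrow> bool" where
  "antichain_in A Fam \<longleftrightarrow> A \<subseteq> Fam \<and> (\<forall>G\<in>A. \<forall>F\<in>A. le_p G F \<longrightarrow> G = F)"

definition prec_fam :: "nat set set \<Rightarrow> nat set set \<Rightarrow> bool" where
  "prec_fam T S \<longleftrightarrow> (\<forall>G\<in>T. \<exists>F\<in>S. prec_p G F)"

definition ideal_p :: "nat \<Rightarrow> nat \<Rightarrow> nat set set \<Rightarrow> nat set set" where
  "ideal_p r n S = {G \<in> pairfam r 1 n. \<exists>F\<in>S. le_p G F}"

definition maximals_p :: "nat set set \<Rightarrow> nat set set" where
  "maximals_p X = {H \<in> X. \<forall>H'\<in>X. le_p H H' \<longrightarrow> H' = H}"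

text \<open>S(J) for J = [j, j+2l-1], S an antichain in F_{2k}^{[1,n]}\<close>
definition SJ :: "nat \<Rightarrow> nat \<Rightarrow> nat set set \<Rightarrow> nat \<Rightarrow> nat \<Rightarrow> nat set set" where
  "SJ k n S l j = maximals_p {H \<in> pairfam (k - l) 1 n.
      H \<subseteq> {j + 2*l..n} \<and> {j..j + 2*l - 1} \<union> H \<in> ideal_p k n S}"

definition gen_cx :: "nat set set \<Rightarrow> nat set set" where
  "gen_cx Fs = {\<sigma>. \<exists>F\<in>Fs. \<sigma> \<subseteq> F}"

definition facets :: "nat set set \<Rightarrow> nat set set" where
  "facets X = {F \<in> X. \<forall>G\<in>X. F \<subseteq> G \<longrightarrow> G = F}"

definition cdiff :: "nat set set \<Rightarrow> nat set set \<Rightarrow> nat set set" where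
  "cdiff X Y = gen_cx (facets X - facets Y)"

definition cjoin :: "nat set set \<Rightarrow> nat set set \<Rightarrow> nat set set" where
  "cjoin X Y = {\<sigma> \<union> \<tau> | \<sigma> \<tau>. \<sigma> \<in> X \<and> \<tau> \<in> Y}"

definition simplex :: "nat set \<Rightarrow> nat set set" where
  "simplex V = Pow V"

definition Bcx :: "nat \<Rightarrow> nat \<Rightarrow> nat set set \<Rightarrow> nat \<Rightarrow> nat set set" where
  "Bcx r n S' m = gen_cx (ideal_p r n S' \<inter> pairfam r m n)"

definition Dcx :: "nat \<Rightarrow> nat \<Rightarrow> nat set set \<Rightarrow> nat set set \<Rightarrow> nat \<Rightarrow> nat set set" where
  "Dcx k n S T i = cjoin (cdiff (Bcx (k - 1) n (SJ k n S 1 i) (i + 2))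
                               (Bcx (k - 1) n (SJ k n T 1 i) (i + 2)))
                         (simplex {i..i+1})"

end

theory Submission
  imports Defs
begin


definition incr :: "nat \<Rightarrow> (nat \<Rightarrow> nat) \<Rightarrow> bool" where
  "incr r f \<longleftrightarrow> (\<forall>j. j + 1 < r \<longrightarrow> f j + 2 \<le> f (j + 1))"

definition vld :: "nat \<Rightarrow> nat \<Rightarrow> nat \<Rightarrow> (nat \<Rightarrow> nat) \<Rightarrow> bool" where
  "vld r m n f \<longleftrightarrow> (0 < r \<longrightarrow> m \<le> f 0 \<and> f (r - 1) + 1 \<le> n) \<and> incr r f"

definition PS :: "(nat \<Rightarrow> nat) \<Rightarrow> nat \<Rightarrow> nat set" where
  "PS f r = (\<Union>j<r. {f j, Suc (f j)})"

definition LL :: "(nat \<Rightarrow> nat) \<Rightarrow> nat \<Rightarrow> nat list" where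
  "LL f r = concat (map (\<lambda>i. [f i, Suc (f i)]) [0..<r])"

lemma pairfam_alt: "pairfam r m n = {PS f r | f. vld r m n f}"
  unfolding pairfam_def PS_def vld_def incr_def by auto

lemma incr_le2: "incr r f \<Longrightarrow> i < l \<Longrightarrow> l < r \<Longrightarrow> f i + 2 \<le> f l"
proof (induction l)
  case 0 then show ?case by simp
next
  case (Suc l)
  then have a: "f l + 2 \<le> f (Suc l)" unfolding incr_def by auto
  show ?case
  proof (cases "i = l")
    case True with a show ?thesis by simp
  next
    case False with Suc have "f i + 2 \<le> f l" by auto
    with a show ?thesis by simp
  qed
qed

lemma incr_mono: "incr r f \<Longrightarrow> i \<le> l \<Longrightarrow> l < r \<Longrightarrow> f i \<le> f l"
  using incr_le2[of r f i l] by (cases "i = l") auto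

lemma incr_lb: "incr r f \<Longrightarrow> l < r \<Longrightarrow> f 0 + 2 * l \<le> f l"
proof (induction l)
  case 0 then show ?case by simp
next
  case (Suc l)
  then have "f l + 2 \<le> f (Suc l)" unfolding incr_def by auto
  with Suc show ?case by simp
qed

lemma incr_ub: "vld r m n f \<Longrightarrow> l < r \<Longrightarrow> f l + 1 \<le> n"
  unfolding vld_def using incr_mono[of r f l "r - 1"] by (cases r) auto

lemma LL_Suc: "LL f (Suc r) = LL f r @ [f r, Suc (f r)]"
  by (simp add: LL_def)

lemma LL_length: "length (LL f r) = 2 * r"
  by (induction r) (auto simp: LL_Suc, simp add: LL_def)

lemma LL_set: "set (LL f r) = PS f r"
  by (auto simp: LL_def PS_def)

lemma LL_nth: "i < r \<Longrightarrow> LL f r ! (2 * i) = f i \<and> LL f r ! (2 * i + 1) = Suc (f i)"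
proof (induction r)
  case 0 then show ?case by simp
next
  case (Suc r)
  show ?case
  proof (cases "i = r")
    case True then show ?thesis by (simp add: LL_Suc nth_append LL_length)
  next
    case False with Suc have "i < r" by simp
    with Suc show ?thesis by (simp add: LL_Suc nth_append LL_length)
  qed
qed

lemma LL_sorted: "incr r f \<Longrightarrow> sorted_wrt (<) (LL f r)"
proof (induction r)
  case 0 then show ?case by (simp add: LL_def)
next
  case (Suc r)
  then have ir: "incr r f" unfolding incr_def by auto
  have "\<forall>x\<in>set (LL f r). x < f r"
  proof
    fix x assume "x \<in> set (LL f r)"
    then obtain i where "i < r" "x = f i \<or> x = Suc (f i)" by (auto simp: LL_set PS_def)
    with incr_le2[OF Suc.prems, of i r] show "x < f r" by auto
  qed
  with Suc.IH[OF ir] show ?case by (auto simp: LL_Suc sorted_wrt_append)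
qed

lemma sl_PS: "incr r f \<Longrightarrow> sorted_list_of_set (PS f r) = LL f r"
  by (metis LL_set LL_sorted sorted_list_of_set.strict_sorted_key_list_of_set strict_sorted_equal
      finite_set set_sorted_list_of_set)

lemma card_PS: "incr r f \<Longrightarrow> card (PS f r) = 2 * r"
  by (metis sl_PS LL_length length_sorted_list_of_set)

lemma finite_PS: "finite (PS f r)"
  by (simp add: PS_def)

lemma PS_inj: "incr r f \<Longrightarrow> incr r g \<Longrightarrow> PS f r = PS g r \<Longrightarrow> l < r \<Longrightarrow> f l = g l"
  by (metis sl_PS LL_nth)

lemma nth_cases2: "(x::nat) < 2 * r \<Longrightarrow> (\<And>i. i < r \<Longrightarrow> x = 2 * i \<Longrightarrow> P) \<Longrightarrow> (\<And>i. i < r \<Longrightarrow> x = 2 * i + 1 \<Longrightarrow> P) \<Longrightarrow> P"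
proof -
  assume x: "x < 2 * r" and A: "\<And>i. i < r \<Longrightarrow> x = 2 * i \<Longrightarrow> P" and B: "\<And>i. i < r \<Longrightarrow> x = 2 * i + 1 \<Longrightarrow> P"
  have e: "x = 2 * (x div 2) + x mod 2" by simp
  have i: "x div 2 < r" using x by linarith
  show P
  proof (cases "x mod 2 = 0")
    case True with e have "x = 2 * (x div 2)" by simp
    with A i show P by blast
  next
    case False then have "x mod 2 = 1" by simp
    with e have "x = 2 * (x div 2) + 1" by simp
    with B i show P by blast
  qed
qed

lemma le_PS: assumes "incr r f" "incr r g"
  shows "le_p (PS f r) (PS g r) \<longleftrightarrow> (\<forall>i<r. f i \<le> g i)"
proof -
  have "le_p (PS f r) (PS g r) \<longleftrightarrow> (\<forall>x<2*r. LL f r ! x \<le> LL g r ! x)"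
    unfolding le_p_def using assms by (simp add: card_PS sl_PS)
  also have "\<dots> \<longleftrightarrow> (\<forall>i<r. f i \<le> g i)"
  proof
    assume H: "\<forall>x<2*r. LL f r ! x \<le> LL g r ! x"
    show "\<forall>i<r. f i \<le> g i"
    proof (intro allI impI)
      fix i assume "i < r"
      then have "2 * i < 2 * r" by simp
      with H LL_nth[OF \<open>i<r\<close>, of f] LL_nth[OF \<open>i<r\<close>, of g] show "f i \<le> g i" by metis
    qed
  next
    assume H: "\<forall>i<r. f i \<le> g i"
    show "\<forall>x<2*r. LL f r ! x \<le> LL g r ! x"
    proof (intro allI impI)
      fix x assume "x < 2 * r"
      then show "LL f r ! x \<le> LL g r ! x"
        by (rule nth_cases2) (use H LL_nth in auto)
    qed
  qed
  finally show ?thesis .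
qed

lemma prec_PS: assumes "incr r f" "incr r g"
  shows "prec_p (PS f r) (PS g r) \<longleftrightarrow> (\<forall>i<r. f i + 1 \<le> g i)"
proof -
  have "prec_p (PS f r) (PS g r) \<longleftrightarrow> (\<forall>x<2*r. LL f r ! x + 1 \<le> LL g r ! x)"
    unfolding prec_p_def using assms by (simp add: card_PS sl_PS)
  also have "\<dots> \<longleftrightarrow> (\<forall>i<r. f i + 1 \<le> g i)"
  proof
    assume H: "\<forall>x<2*r. LL f r ! x + 1 \<le> LL g r ! x"
    show "\<forall>i<r. f i + 1 \<le> g i"
    proof (intro allI impI)
      fix i assume "i < r"
      then have "2 * i < 2 * r" by simp
      with H LL_nth[OF \<open>i<r\<close>, of f] LL_nth[OF \<open>i<r\<close>, of g] show "f i + 1 \<le> g i" by metis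
    qed
  next
    assume H: "\<forall>i<r. f i + 1 \<le> g i"
    show "\<forall>x<2*r. LL f r ! x + 1 \<le> LL g r ! x"
    proof (intro allI impI)
      fix x assume "x < 2 * r"
      then show "LL f r ! x + 1 \<le> LL g r ! x"
        by (rule nth_cases2) (use H LL_nth in auto)
    qed
  qed
  finally show ?thesis .
qed

lemma le_p_refl: "le_p A A"
  by (simp add: le_p_def)

lemma le_p_trans: "le_p A B \<Longrightarrow> le_p B C \<Longrightarrow> le_p A C"
proof -
  assume a: "le_p A B" and b: "le_p B C"
  show "le_p A C" unfolding le_p_def
  proof (intro conjI allI impI)
    show "card A = card C" using a b by (simp add: le_p_def)
    fix i assume "i < card A"
    then have "sorted_list_of_set A ! i \<le> sorted_list_of_set B ! i"
       "sorted_list_of_set B ! i \<le> sorted_list_of_set C ! i" using a b by (auto simp: le_p_def)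
    then show "sorted_list_of_set A ! i \<le> sorted_list_of_set C ! i" by simp
  qed
qed

lemma le_p_sum: assumes "finite A" "finite B" "le_p A B"
  shows "\<Sum>A \<le> \<Sum>B \<and> (\<Sum>A = \<Sum>B \<longrightarrow> A = B)"
proof -
  let ?xs = "sorted_list_of_set A" and ?ys = "sorted_list_of_set B"
  have len: "length ?xs = length ?ys" using assms(3) by (simp add: le_p_def)
  have le: "\<forall>i<length ?xs. ?xs ! i \<le> ?ys ! i" using assms(3) by (simp add: le_p_def)
  have sA: "\<Sum>A = (\<Sum>i<length ?xs. ?xs ! i)"
    using sum_list_distinct_conv_sum_set[of ?xs "\<lambda>x. x"] assms(1)
    by (simp add: sum_list_sum_nth atLeast0LessThan)
  have sB: "\<Sum>B = (\<Sum>i<length ?xs. ?ys ! i)"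
    using sum_list_distinct_conv_sum_set[of ?ys "\<lambda>x. x"] assms(2) len
    by (simp add: sum_list_sum_nth atLeast0LessThan)
  have 1: "\<Sum>A \<le> \<Sum>B" unfolding sA sB by (rule sum_mono) (use le in auto)
  have 2: "A = B" if eq: "\<Sum>A = \<Sum>B"
  proof -
    have "\<forall>i<length ?xs. ?xs ! i = ?ys ! i"
    proof (rule ccontr)
      assume "\<not> ?thesis"
      then obtain i where i: "i < length ?xs" "?xs ! i < ?ys ! i" using le by (meson le_neq_implies_less)
      have "(\<Sum>i<length ?xs. ?xs ! i) < (\<Sum>i<length ?xs. ?ys ! i)"
        by (rule sum_strict_mono_ex1) (use le i in auto)
      with eq sA sB show False by simp
    qed
    then have "?xs = ?ys" using len by (intro nth_equalityI) auto
    then show ?thesis using assms(1,2) by (metis set_sorted_list_of_set)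
  qed
  from 1 2 show ?thesis by blast
qed

lemma exists_maximal:
  assumes "finite X" "\<forall>H\<in>X. finite H" "H \<in> X"
  shows "\<exists>M\<in>maximals_p X. le_p H M"
proof -
  let ?Y = "{M\<in>X. le_p H M}"
  have fY: "finite ?Y" using assms(1) by simp
  have nY: "?Y \<noteq> {}" using assms(3) le_p_refl by blast
  let ?s = "Max ((\<lambda>M. \<Sum>M) ` ?Y)"
  have "?s \<in> (\<lambda>M. \<Sum>M) ` ?Y" using fY nY by (intro Max_in) auto
  then obtain M where M1: "M \<in> ?Y" "\<Sum>M = ?s" by auto
  have M2: "\<forall>M'\<in>?Y. \<Sum>M' \<le> \<Sum>M" using fY M1(2) by (auto intro: Max_ge)
  note M = M1(1) M2
  have "\<forall>H'\<in>X. le_p M H' \<longrightarrow> H' = M"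
  proof (intro ballI impI)
    fix H' assume "H' \<in> X" "le_p M H'"
    then have "H' \<in> ?Y" using M le_p_trans by blast
    then have "\<Sum>H' \<le> \<Sum>M" using M by blast
    moreover have "\<Sum>M \<le> \<Sum>H' \<and> (\<Sum>M = \<Sum>H' \<longrightarrow> M = H')"
      using le_p_sum[of M H'] \<open>H' \<in> X\<close> \<open>le_p M H'\<close> M assms(2) by blast
    ultimately have "\<Sum>M = \<Sum>H'" "\<Sum>M = \<Sum>H' \<longrightarrow> M = H'" by (simp_all add: le_antisym)
    then show "H' = M" by simp
  qed
  then have "M \<in> maximals_p X" unfolding maximals_p_def using M by simp
  with M show ?thesis by blast
qed

lemma pf_obtain: "G \<in> pairfam r m n \<Longrightarrow> \<exists>f. G = PS f r \<and> vld r m n f"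
  by (auto simp: pairfam_alt)

lemma pf_intro: "vld r m n f \<Longrightarrow> PS f r \<in> pairfam r m n"
  by (auto simp: pairfam_alt)

lemma vld_incr: "vld r m n f \<Longrightarrow> incr r f"
  by (simp add: vld_def)

lemma PS_sub: "vld r m n f \<Longrightarrow> PS f r \<subseteq> {m..n}"
proof
  fix x assume v: "vld r m n f" and "x \<in> PS f r"
  then obtain i where i: "i < r" "x = f i \<or> x = Suc (f i)" by (auto simp: PS_def)
  have "f 0 \<le> f i" using incr_mono[of r f 0 i] v i by (simp add: vld_def)
  moreover have "m \<le> f 0" using v i by (simp add: vld_def)
  moreover have "f i + 1 \<le> n" using incr_ub[OF v i(1)] .
  ultimately show "x \<in> {m..n}" using i by auto
qed

lemma pf_sub: "G \<in> pairfam r m n \<Longrightarrow> G \<subseteq> {m..n}"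
  using pf_obtain PS_sub by blast

lemma pf_mono: "m \<le> m' \<Longrightarrow> G \<in> pairfam r m' n \<Longrightarrow> G \<in> pairfam r m n"
  unfolding pairfam_alt vld_def by auto

lemma pf_restrict: assumes "G \<in> pairfam r m' n" "G \<subseteq> {m..n}" shows "G \<in> pairfam r m n"
proof -
  obtain f where f: "G = PS f r" "vld r m' n f" using pf_obtain[OF assms(1)] by blast
  have "0 < r \<Longrightarrow> f 0 \<in> G" using f by (auto simp: PS_def)
  then have "0 < r \<Longrightarrow> m \<le> f 0" using assms(2) by auto
  then have "vld r m n f" using f(2) by (simp add: vld_def)
  then show ?thesis using f pf_intro by simp
qed

lemma pf_card: "G \<in> pairfam r m n \<Longrightarrow> finite G \<and> card G = 2 * r"
proof -
  assume "G \<in> pairfam r m n"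
  then obtain f where "G = PS f r" "vld r m n f" using pf_obtain by blast
  then show ?thesis using finite_PS card_PS vld_incr by simp
qed

lemma pf_finite_fam: "finite (pairfam r m n)"
proof -
  have "pairfam r m n \<subseteq> Pow {m..n}" using pf_sub by blast
  then show ?thesis by (rule finite_subset) simp
qed

lemma pair_eq: "{i..i+1} = {i, Suc (i::nat)}" by auto

lemma PS_cons: "PS (case_nat i f) (Suc r) = {i..i+1} \<union> PS f r"
proof -
  have "PS (case_nat i f) (Suc r) = {i, Suc i} \<union> (\<Union>j<r. {f j, Suc (f j)})"
    unfolding PS_def lessThan_Suc_eq_insert_0 by simp
  then show ?thesis unfolding PS_def by auto
qed

lemma incr_cons: "incr (Suc r) (case_nat i f) \<longleftrightarrow> (0 < r \<longrightarrow> i + 2 \<le> f 0) \<and> incr r f"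
proof
  assume H: "incr (Suc r) (case_nat i f)"
  have a: "0 < r \<longrightarrow> i + 2 \<le> f 0" using H[unfolded incr_def, rule_format, of 0] by simp
  have b: "incr r f" unfolding incr_def
  proof (intro allI impI)
    fix j assume "j + 1 < r"
    then show "f j + 2 \<le> f (j + 1)" using H[unfolded incr_def, rule_format, of "Suc j"] by simp
  qed
  from a b show "(0 < r \<longrightarrow> i + 2 \<le> f 0) \<and> incr r f" by blast
next
  assume H: "(0 < r \<longrightarrow> i + 2 \<le> f 0) \<and> incr r f"
  show "incr (Suc r) (case_nat i f)" unfolding incr_def
  proof (intro allI impI)
    fix j assume j: "j + 1 < Suc r"
    show "case_nat i f j + 2 \<le> case_nat i f (j + 1)"
    proof (cases j)
      case 0 then show ?thesis using H j by simp
    next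
      case (Suc j') then show ?thesis using H j unfolding incr_def by simp
    qed
  qed
qed

lemma pf_le: assumes "incr k g" "0 < k \<longrightarrow> 1 \<le> g 0" "B \<in> pairfam k m n" "le_p (PS g k) B"
  shows "PS g k \<in> pairfam k 1 n \<and> (\<forall>i<k. g i + 1 \<le> n)"
proof -
  obtain b where b: "B = PS b k" "vld k m n b" using pf_obtain[OF assms(3)] by blast
  have le: "\<forall>i<k. g i \<le> b i" using le_PS[OF assms(1) vld_incr[OF b(2)]] assms(4) b by simp
  have ub: "\<forall>i<k. g i + 1 \<le> n"
  proof (intro allI impI)
    fix i assume i: "i < k"
    then have "g i \<le> b i" using le by simp
    moreover have "b i + 1 \<le> n" using incr_ub[OF b(2) i] .
    ultimately show "g i + 1 \<le> n" by simp
  qed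
  have "vld k 1 n g" using assms(1,2) ub unfolding vld_def by simp
  then show ?thesis using pf_intro ub by blast
qed

lemma ideal_mem: assumes "U \<subseteq> pairfam k 1 n" "incr k g" "0 < k \<longrightarrow> 1 \<le> g 0" "F \<in> U" "le_p (PS g k) F"
  shows "PS g k \<in> ideal_p k n U"
proof -
  have "F \<in> pairfam k 1 n" using assms(1,4) by blast
  then have "PS g k \<in> pairfam k 1 n" using pf_le[OF assms(2,3) _ assms(5)] by blast
  then show ?thesis unfolding ideal_p_def using assms(4,5) by blast
qed




lemma gen_cx_iff: "\<sigma> \<in> gen_cx X \<longleftrightarrow> (\<exists>F\<in>X. \<sigma> \<subseteq> F)"
  by (simp add: gen_cx_def)

lemma facets_iff: "F \<in> facets X \<longleftrightarrow> F \<in> X \<and> (\<forall>G\<in>X. F \<subseteq> G \<longrightarrow> G = F)"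
  by (simp add: facets_def)

lemma gen_facets: assumes "\<forall>G\<in>X. finite G \<and> card G = c" shows "facets (gen_cx X) = X"
proof
  show "facets (gen_cx X) \<subseteq> X"
  proof
    fix F assume F: "F \<in> facets (gen_cx X)"
    then have F1: "F \<in> gen_cx X" and F2: "\<forall>G\<in>gen_cx X. F \<subseteq> G \<longrightarrow> G = F"
      by (simp_all add: facets_iff)
    obtain G where G: "G \<in> X" "F \<subseteq> G" using F1 gen_cx_iff by blast
    have "G \<in> gen_cx X" using G(1) gen_cx_iff by blast
    then have "G = F" using F2 G(2) by blast
    then show "F \<in> X" using G by simp
  qed
next
  show "X \<subseteq> facets (gen_cx X)"
  proof
    fix F assume F: "F \<in> X"
    have "\<forall>G\<in>gen_cx X. F \<subseteq> G \<longrightarrow> G = F"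
    proof (intro ballI impI)
      fix G assume "G \<in> gen_cx X" "F \<subseteq> G"
      then obtain G' where G': "G' \<in> X" "G \<subseteq> G'" using gen_cx_iff by blast
      have "F \<subseteq> G'" using G' \<open>F \<subseteq> G\<close> by blast
      moreover have "finite G'" "card G' = card F" using assms F G'(1) by auto
      ultimately have "F = G'" using card_subset_eq[of G' F] by simp
      then show "G = F" using G' \<open>F \<subseteq> G\<close> by blast
    qed
    moreover have "F \<in> gen_cx X" using F gen_cx_iff by blast
    ultimately show "F \<in> facets (gen_cx X)" by (simp add: facets_iff)
  qed
qed

lemma cdiff_gen: assumes "\<forall>G\<in>X. finite G \<and> card G = c" "\<forall>G\<in>Y. finite G \<and> card G = c"
  shows "cdiff (gen_cx X) (gen_cx Y) = gen_cx (X - Y)"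
  unfolding cdiff_def using gen_facets[OF assms(1)] gen_facets[OF assms(2)] by simp

lemma cjoin_gen: "cjoin (gen_cx X) (simplex V) = gen_cx ((\<lambda>H. H \<union> V) ` X)"
proof
  show "cjoin (gen_cx X) (simplex V) \<subseteq> gen_cx ((\<lambda>H. H \<union> V) ` X)"
  proof
    fix \<rho> assume "\<rho> \<in> cjoin (gen_cx X) (simplex V)"
    then obtain \<sigma> \<tau> where st: "\<rho> = \<sigma> \<union> \<tau>" "\<sigma> \<in> gen_cx X" "\<tau> \<subseteq> V"
      unfolding cjoin_def simplex_def by blast
    then obtain H where H: "H \<in> X" "\<sigma> \<subseteq> H" unfolding gen_cx_def by blast
    have "\<rho> \<subseteq> H \<union> V" using st H by blast
    then show "\<rho> \<in> gen_cx ((\<lambda>H. H \<union> V) ` X)" using H(1) unfolding gen_cx_def by blast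
  qed
next
  show "gen_cx ((\<lambda>H. H \<union> V) ` X) \<subseteq> cjoin (gen_cx X) (simplex V)"
  proof
    fix \<rho> assume "\<rho> \<in> gen_cx ((\<lambda>H. H \<union> V) ` X)"
    then obtain H where H: "H \<in> X" "\<rho> \<subseteq> H \<union> V" by (auto simp: gen_cx_def)
    have "\<rho> = (\<rho> - V) \<union> (\<rho> \<inter> V)" by blast
    moreover have "\<rho> - V \<in> gen_cx X" using H by (auto simp: gen_cx_def)
    moreover have "\<rho> \<inter> V \<in> simplex V" by (simp add: simplex_def)
    ultimately show "\<rho> \<in> cjoin (gen_cx X) (simplex V)" unfolding cjoin_def by blast
  qed
qed

lemma inter_gen:
  assumes "\<forall>c\<in>C. (\<exists>a\<in>A. c \<subseteq> a) \<and> (\<exists>b\<in>B. c \<subseteq> b)"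
    and "\<And>\<sigma> a b. a \<in> A \<Longrightarrow> b \<in> B \<Longrightarrow> \<sigma> \<subseteq> a \<Longrightarrow> \<sigma> \<subseteq> b \<Longrightarrow> \<exists>c\<in>C. \<sigma> \<subseteq> c"
  shows "gen_cx A \<inter> gen_cx B = gen_cx C"
proof
  show "gen_cx A \<inter> gen_cx B \<subseteq> gen_cx C"
  proof
    fix \<sigma> assume "\<sigma> \<in> gen_cx A \<inter> gen_cx B"
    then obtain a b where "a \<in> A" "b \<in> B" "\<sigma> \<subseteq> a" "\<sigma> \<subseteq> b" unfolding gen_cx_def by blast
    then obtain c where "c \<in> C" "\<sigma> \<subseteq> c" using assms(2) by blast
    then show "\<sigma> \<in> gen_cx C" unfolding gen_cx_def by blast
  qed
  show "gen_cx C \<subseteq> gen_cx A \<inter> gen_cx B"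
  proof
    fix \<sigma> assume "\<sigma> \<in> gen_cx C"
    then obtain c where c: "c \<in> C" "\<sigma> \<subseteq> c" unfolding gen_cx_def by blast
    then obtain a b where "a \<in> A" "b \<in> B" "c \<subseteq> a" "c \<subseteq> b" using assms(1) by blast
    then show "\<sigma> \<in> gen_cx A \<inter> gen_cx B" using c unfolding gen_cx_def by blast
  qed
qed

definition XX :: "nat \<Rightarrow> nat \<Rightarrow> nat set set \<Rightarrow> nat \<Rightarrow> nat set set" where
  "XX k n U i = {H \<in> pairfam (k - 1) (i + 2) n. {i..i+1} \<union> H \<in> ideal_p k n U}"

lemma le_pair: assumes "vld r (i+2) n f" "vld r (i'+2) n' g"
  shows "le_p ({i..i+1} \<union> PS f r) ({i'..i'+1} \<union> PS g r) \<longleftrightarrow> i \<le> i' \<and> (\<forall>l<r. f l \<le> g l)"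
proof -
  have if': "incr (Suc r) (case_nat i f)" using assms(1) incr_cons by (simp add: vld_def)
  have ig: "incr (Suc r) (case_nat i' g)" using assms(2) incr_cons by (simp add: vld_def)
  have "le_p ({i..i+1} \<union> PS f r) ({i'..i'+1} \<union> PS g r) \<longleftrightarrow>
        (\<forall>l<Suc r. case_nat i f l \<le> case_nat i' g l)"
    using le_PS[OF if' ig] by (simp add: PS_cons)
  also have "\<dots> \<longleftrightarrow> i \<le> i' \<and> (\<forall>l<r. f l \<le> g l)"
  proof
    assume H: "\<forall>l<Suc r. case_nat i f l \<le> case_nat i' g l"
    have "i \<le> i'" using H[rule_format, of 0] by simp
    moreover have "\<forall>l<r. f l \<le> g l"
    proof (intro allI impI)
      fix l assume "l < r"
      then show "f l \<le> g l" using H[rule_format, of "Suc l"] by simp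
    qed
    ultimately show "i \<le> i' \<and> (\<forall>l<r. f l \<le> g l)" by blast
  next
    assume H: "i \<le> i' \<and> (\<forall>l<r. f l \<le> g l)"
    show "\<forall>l<Suc r. case_nat i f l \<le> case_nat i' g l"
    proof (intro allI impI)
      fix l assume "l < Suc r" then show "case_nat i f l \<le> case_nat i' g l"
        using H by (cases l) auto
    qed
  qed
  finally show ?thesis .
qed

lemma XX_down:
  assumes U: "U \<subseteq> pairfam (Suc r) 1 n" and i: "1 \<le> i'" "i' \<le> i"
    and G: "G \<in> pairfam r (i'+2) n" and M: "M \<in> XX (Suc r) n U i" and le: "le_p G M"
  shows "G \<in> XX (Suc r) n U i'"
proof -
  obtain g where g: "G = PS g r" "vld r (i'+2) n g" using pf_obtain[OF G] by blast
  have M1: "M \<in> pairfam r (i+2) n" "{i..i+1} \<union> M \<in> ideal_p (Suc r) n U" using M by (auto simp: XX_def)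
  obtain f where f: "M = PS f r" "vld r (i+2) n f" using pf_obtain[OF M1(1)] by blast
  obtain F where F: "F \<in> U" "le_p ({i..i+1} \<union> M) F" using M1(2) by (auto simp: ideal_p_def)
  have "\<forall>l<r. g l \<le> f l" using le le_PS[OF vld_incr[OF g(2)] vld_incr[OF f(2)]] g(1) f(1) by simp
  then have "le_p ({i'..i'+1} \<union> G) ({i..i+1} \<union> M)" using le_pair[OF g(2) f(2)] g f i by simp
  then have "le_p ({i'..i'+1} \<union> G) F" using F(2) le_p_trans by blast
  then have le2: "le_p (PS (case_nat i' g) (Suc r)) F" using g(1) by (simp add: PS_cons)
  have ig: "incr (Suc r) (case_nat i' g)" using g(2) incr_cons by (simp add: vld_def)
  have "PS (case_nat i' g) (Suc r) \<in> ideal_p (Suc r) n U"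
    by (rule ideal_mem[OF U ig _ F(1) le2]) (use i in simp)
  then show ?thesis using G g by (simp add: XX_def PS_cons)
qed




lemma SJ_eq: "SJ (Suc r) n U 1 i = maximals_p {H \<in> pairfam r 1 n. H \<subseteq> {i+2..n} \<and> {i..i+1} \<union> H \<in> ideal_p (Suc r) n U}"
  by (simp add: SJ_def)

lemma raw_eq: "{H \<in> pairfam r 1 n. H \<subseteq> {i+2..n} \<and> {i..i+1} \<union> H \<in> ideal_p (Suc r) n U} = XX (Suc r) n U i"
proof
  show "{H \<in> pairfam r 1 n. H \<subseteq> {i+2..n} \<and> {i..i+1} \<union> H \<in> ideal_p (Suc r) n U} \<subseteq> XX (Suc r) n U i"
  proof
    fix H assume "H \<in> {H \<in> pairfam r 1 n. H \<subseteq> {i+2..n} \<and> {i..i+1} \<union> H \<in> ideal_p (Suc r) n U}"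
    then have "H \<in> pairfam r 1 n" "H \<subseteq> {i+2..n}" "{i..i+1} \<union> H \<in> ideal_p (Suc r) n U" by auto
    then show "H \<in> XX (Suc r) n U i" using pf_restrict[of H r 1 n "i+2"] by (simp add: XX_def)
  qed
next
  show "XX (Suc r) n U i \<subseteq> {H \<in> pairfam r 1 n. H \<subseteq> {i+2..n} \<and> {i..i+1} \<union> H \<in> ideal_p (Suc r) n U}"
  proof
    fix H assume "H \<in> XX (Suc r) n U i"
    then have H: "H \<in> pairfam r (i+2) n" "{i..i+1} \<union> H \<in> ideal_p (Suc r) n U" by (auto simp: XX_def)
    have "H \<in> pairfam r 1 n" using pf_mono[of 1 "i+2" H r n] H(1) by simp
    moreover have "H \<subseteq> {i+2..n}" using pf_sub[OF H(1)] .
    ultimately show "H \<in> {H \<in> pairfam r 1 n. H \<subseteq> {i+2..n} \<and> {i..i+1} \<union> H \<in> ideal_p (Suc r) n U}"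
      using H(2) by simp
  qed
qed

lemma SJ_XX: "SJ (Suc r) n U 1 i = maximals_p (XX (Suc r) n U i)"
  using SJ_eq raw_eq by simp

lemma XX_pf: "G \<in> XX (Suc r) n U i \<Longrightarrow> G \<in> pairfam r (i+2) n"
  by (simp add: XX_def)

lemma SJ_sub: "SJ (Suc r) n U 1 i \<subseteq> XX (Suc r) n U i"
  unfolding SJ_XX maximals_p_def by blast

lemma SJ_max: assumes "H \<in> XX (Suc r) n U i" shows "\<exists>M\<in>SJ (Suc r) n U 1 i. le_p H M"
proof -
  have "XX (Suc r) n U i \<subseteq> pairfam r (i+2) n" using XX_pf by blast
  then have f: "finite (XX (Suc r) n U i)" using pf_finite_fam finite_subset by blast
  have "\<forall>G\<in>XX (Suc r) n U i. finite G" using XX_pf pf_card by blast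
  from exists_maximal[OF f this assms] show ?thesis unfolding SJ_XX .
qed

lemma ideal_SJ: "ideal_p r n (SJ (Suc r) n U 1 i) = {G \<in> pairfam r 1 n. \<exists>M\<in>XX (Suc r) n U i. le_p G M}"
proof
  show "ideal_p r n (SJ (Suc r) n U 1 i) \<subseteq> {G \<in> pairfam r 1 n. \<exists>M\<in>XX (Suc r) n U i. le_p G M}"
    unfolding ideal_p_def using SJ_sub by blast
next
  show "{G \<in> pairfam r 1 n. \<exists>M\<in>XX (Suc r) n U i. le_p G M} \<subseteq> ideal_p r n (SJ (Suc r) n U 1 i)"
  proof
    fix G assume "G \<in> {G \<in> pairfam r 1 n. \<exists>M\<in>XX (Suc r) n U i. le_p G M}"
    then obtain M where G: "G \<in> pairfam r 1 n" "M \<in> XX (Suc r) n U i" "le_p G M" by blast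
    obtain M' where M': "M' \<in> SJ (Suc r) n U 1 i" "le_p M M'" using SJ_max[OF G(2)] by blast
    have "le_p G M'" using le_p_trans[OF G(3) M'(2)] .
    then show "G \<in> ideal_p r n (SJ (Suc r) n U 1 i)" unfolding ideal_p_def using G(1) M'(1) by blast
  qed
qed

lemma B_XX: assumes "U \<subseteq> pairfam (Suc r) 1 n" "1 \<le> i"
  shows "Bcx r n (SJ (Suc r) n U 1 i) (i+2) = gen_cx (XX (Suc r) n U i)"
proof -
  have "ideal_p r n (SJ (Suc r) n U 1 i) \<inter> pairfam r (i+2) n = XX (Suc r) n U i"
  proof
    show "ideal_p r n (SJ (Suc r) n U 1 i) \<inter> pairfam r (i+2) n \<subseteq> XX (Suc r) n U i"
    proof
      fix G assume "G \<in> ideal_p r n (SJ (Suc r) n U 1 i) \<inter> pairfam r (i+2) n"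
      then obtain M where G: "G \<in> pairfam r (i+2) n" "M \<in> XX (Suc r) n U i" "le_p G M"
        unfolding ideal_SJ by blast
      show "G \<in> XX (Suc r) n U i" using XX_down[OF assms(1) assms(2) order_refl G] .
    qed
  next
    show "XX (Suc r) n U i \<subseteq> ideal_p r n (SJ (Suc r) n U 1 i) \<inter> pairfam r (i+2) n"
    proof
      fix G assume G: "G \<in> XX (Suc r) n U i"
      have G1: "G \<in> pairfam r (i+2) n" using XX_pf[OF G] .
      have "G \<in> pairfam r 1 n" using pf_mono[of 1 "i+2" G r n] G1 by simp
      then have "G \<in> ideal_p r n (SJ (Suc r) n U 1 i)" unfolding ideal_SJ using G le_p_refl by blast
      then show "G \<in> ideal_p r n (SJ (Suc r) n U 1 i) \<inter> pairfam r (i+2) n" using G1 by blast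
    qed
  qed
  then show ?thesis unfolding Bcx_def by simp
qed

definition YY :: "nat \<Rightarrow> nat \<Rightarrow> nat set set \<Rightarrow> nat \<Rightarrow> nat set set" where
  "YY r n S j = {G \<in> pairfam r (j+2) n. \<exists>M\<in>XX (Suc r) n S (Suc j). le_p G M}"

lemma B_YY: "Bcx r n (SJ (Suc r) n S 1 (Suc j)) (j+2) = gen_cx (YY r n S j)"
proof -
  have "ideal_p r n (SJ (Suc r) n S 1 (Suc j)) \<inter> pairfam r (j+2) n = YY r n S j"
  proof
    show "ideal_p r n (SJ (Suc r) n S 1 (Suc j)) \<inter> pairfam r (j+2) n \<subseteq> YY r n S j"
      unfolding ideal_SJ YY_def by blast
  next
    show "YY r n S j \<subseteq> ideal_p r n (SJ (Suc r) n S 1 (Suc j)) \<inter> pairfam r (j+2) n"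
    proof
      fix G assume G: "G \<in> YY r n S j"
      then have G1: "G \<in> pairfam r (j+2) n" "\<exists>M\<in>XX (Suc r) n S (Suc j). le_p G M" by (auto simp: YY_def)
      have "G \<in> pairfam r 1 n" using pf_mono[of 1 "j+2" G r n] G1 by simp
      then show "G \<in> ideal_p r n (SJ (Suc r) n S 1 (Suc j)) \<inter> pairfam r (j+2) n"
        unfolding ideal_SJ using G1 by blast
    qed
  qed
  then show ?thesis unfolding Bcx_def by simp
qed

lemma XX_card: "\<forall>G\<in>XX (Suc r) n U i. finite G \<and> card G = 2 * r"
  using XX_pf pf_card by blast

lemma YY_card: "\<forall>G\<in>YY r n S j. finite G \<and> card G = 2 * r"
  using pf_card unfolding YY_def by blast

lemma Dcx_eq: assumes "S \<subseteq> pairfam (Suc r) 1 n" "T \<subseteq> pairfam (Suc r) 1 n" "1 \<le> i"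
  shows "Dcx (Suc r) n S T i = gen_cx ((\<lambda>H. H \<union> {i..i+1}) ` (XX (Suc r) n S i - XX (Suc r) n T i))"
proof -
  have "Dcx (Suc r) n S T i = cjoin (cdiff (Bcx r n (SJ (Suc r) n S 1 i) (i + 2))
                               (Bcx r n (SJ (Suc r) n T 1 i) (i + 2))) (simplex {i..i+1})"
    unfolding Dcx_def by simp
  also have "\<dots> = cjoin (cdiff (gen_cx (XX (Suc r) n S i)) (gen_cx (XX (Suc r) n T i))) (simplex {i..i+1})"
    using B_XX[OF assms(1,3)] B_XX[OF assms(2,3)] by simp
  also have "\<dots> = cjoin (gen_cx (XX (Suc r) n S i - XX (Suc r) n T i)) (simplex {i..i+1})"
    using cdiff_gen[OF XX_card XX_card] by simp
  also have "\<dots> = gen_cx ((\<lambda>H. H \<union> {i..i+1}) ` (XX (Suc r) n S i - XX (Suc r) n T i))"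
    by (rule cjoin_gen)
  finally show ?thesis .
qed

lemma RHS_eq: assumes "T \<subseteq> pairfam (Suc r) 1 n" "1 \<le> j"
  shows "cjoin (cdiff (Bcx r n (SJ (Suc r) n S 1 (Suc j)) (j + 2))
                  (Bcx r n (SJ (Suc r) n T 1 j) (j + 2))) (simplex {j + 1})
   = gen_cx ((\<lambda>H. H \<union> {j+1}) ` (YY r n S j - XX (Suc r) n T j))"
proof -
  have "cjoin (cdiff (Bcx r n (SJ (Suc r) n S 1 (Suc j)) (j + 2))
                  (Bcx r n (SJ (Suc r) n T 1 j) (j + 2))) (simplex {j + 1})
     = cjoin (cdiff (gen_cx (YY r n S j)) (gen_cx (XX (Suc r) n T j))) (simplex {j + 1})"
    using B_YY B_XX[OF assms] by simp
  also have "\<dots> = cjoin (gen_cx (YY r n S j - XX (Suc r) n T j)) (simplex {j + 1})"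
    using cdiff_gen[OF YY_card XX_card] by simp
  also have "\<dots> = gen_cx ((\<lambda>H. H \<union> {j+1}) ` (YY r n S j - XX (Suc r) n T j))"
    by (rule cjoin_gen)
  finally show ?thesis .
qed




lemma PS_mem: "x \<in> PS f r \<longleftrightarrow> (\<exists>l<r. x = f l \<or> x = Suc (f l))"
  by (auto simp: PS_def)

lemma shift_T:
  assumes S: "S \<subseteq> pairfam (Suc r) 1 n" and T: "T \<subseteq> pairfam (Suc r) 1 n" and P: "prec_fam T S"
    and j: "1 \<le> j" and c: "vld r (j+2) n c" and H0: "PS c r \<in> XX (Suc r) n T j"
  shows "PS (\<lambda>l. c l + 1) r \<in> XX (Suc r) n S (Suc j) \<and> vld r (Suc j + 2) n (\<lambda>l. c l + 1)"
proof -
  let ?cc = "case_nat j c" and ?dd = "case_nat (Suc j) (\<lambda>l. c l + 1)"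
  have icc: "incr (Suc r) ?cc" using c incr_cons by (simp add: vld_def)
  have ic1: "incr r (\<lambda>l. c l + 1)" using c by (simp add: vld_def incr_def)
  have idd: "incr (Suc r) ?dd" using incr_cons[of r "Suc j" "\<lambda>l. c l + 1"] ic1 c by (simp add: vld_def)
  have "{j..j+1} \<union> PS c r \<in> ideal_p (Suc r) n T" using H0 by (simp add: XX_def)
  then obtain G0 where G0: "G0 \<in> T" "le_p (PS ?cc (Suc r)) G0" by (auto simp: ideal_p_def PS_cons)
  obtain g0 where g0: "G0 = PS g0 (Suc r)" "vld (Suc r) 1 n g0" using pf_obtain G0(1) T by blast
  have le1: "\<forall>l<Suc r. ?cc l \<le> g0 l" using le_PS[OF icc vld_incr[OF g0(2)]] G0(2) g0(1) by simp
  obtain F where F: "F \<in> S" "prec_p G0 F" using P G0(1) by (auto simp: prec_fam_def)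
  obtain f where f: "F = PS f (Suc r)" "vld (Suc r) 1 n f" using pf_obtain F(1) S by blast
  have le2: "\<forall>l<Suc r. g0 l + 1 \<le> f l" using prec_PS[OF vld_incr[OF g0(2)] vld_incr[OF f(2)]] F(2) g0(1) f(1) by simp
  have le3: "\<forall>l<Suc r. ?dd l \<le> f l"
  proof (intro allI impI)
    fix l assume l: "l < Suc r"
    have "?dd l = ?cc l + 1" by (cases l) auto
    then show "?dd l \<le> f l" using le1 le2 l by force
  qed
  have le4: "le_p (PS ?dd (Suc r)) F" using le_PS[OF idd vld_incr[OF f(2)]] le3 f(1) by simp
  have pf: "PS ?dd (Suc r) \<in> pairfam (Suc r) 1 n \<and> (\<forall>l<Suc r. ?dd l + 1 \<le> n)"
    using pf_le[OF idd _ _ le4, of 1] F(1) S by auto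
  have "PS ?dd (Suc r) \<in> ideal_p (Suc r) n S"
    using ideal_mem[OF S idd _ F(1) le4] by simp
  then have m1: "{Suc j..Suc j+1} \<union> PS (\<lambda>l. c l + 1) r \<in> ideal_p (Suc r) n S" by (simp add: PS_cons)
  have v: "vld r (Suc j + 2) n (\<lambda>l. c l + 1)"
  proof -
    have "0 < r \<Longrightarrow> c (r - 1) + 1 + 1 \<le> n"
    proof -
      assume "0 < r"
      then have "?dd r = c (r - 1) + 1" by (cases r) auto
      then show ?thesis using pf by auto
    qed
    then show ?thesis using c ic1 by (simp add: vld_def)
  qed
  have "PS (\<lambda>l. c l + 1) r \<in> pairfam r (Suc j + 2) n" using pf_intro[OF v] .
  then show ?thesis using m1 v by (simp add: XX_def)
qed

lemma caseA: assumes "incr r h" "incr r c" "\<forall>p<r. c p \<in> PS h r"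
  shows "\<forall>p<r. h p \<le> c p"
proof (intro allI impI)
  fix p assume "p < r"
  then show "h p \<le> c p"
  proof (induction p)
    case 0
    obtain s where s: "s < r" "c 0 = h s \<or> c 0 = Suc (h s)" using assms(3) 0 PS_mem by blast
    have "h 0 \<le> h s" using incr_mono[OF assms(1), of 0 s] s by simp
    then show ?case using s by auto
  next
    case (Suc p)
    obtain s where s: "s < r" "c (Suc p) = h s \<or> c (Suc p) = Suc (h s)" using assms(3) Suc.prems PS_mem by blast
    show ?case
    proof (cases "Suc p \<le> s")
      case True
      have "h (Suc p) \<le> h s" using incr_mono[OF assms(1) True s(1)] .
      then show ?thesis using s by auto
    next
      case False
      then have sp: "s \<le> p" by simp
      have ih: "h p \<le> c p" using Suc by simp
      have "c p + 2 \<le> c (Suc p)" using assms(2) Suc.prems unfolding incr_def by auto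
      moreover have "h s \<le> h p" using incr_mono[OF assms(1) sp] Suc.prems by simp
      ultimately show ?thesis using s ih by auto
    qed
  qed
qed

lemma min_cover:
  assumes h: "incr r h" and h': "incr r h'" and h0: "0 < r \<longrightarrow> j + 2 \<le> h 0" and h'0: "0 < r \<longrightarrow> j + 3 \<le> h' 0"
    and t1: "\<tau> \<subseteq> PS h r" and t2: "\<tau> \<subseteq> insert (j+2) (PS h' r)"
  shows "\<tau> \<subseteq> PS (\<lambda>l. min (h l) (h' l)) r"
proof
  fix x assume x: "x \<in> \<tau>"
  obtain i where i: "i < r" "x = h i \<or> x = Suc (h i)" using t1 x PS_mem by blast
  have "x = j + 2 \<or> x \<in> PS h' r" using t2 x by blast
  then show "x \<in> PS (\<lambda>l. min (h l) (h' l)) r"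
  proof
    assume xj: "x = j + 2"
    have i0: "i = 0"
    proof (rule ccontr)
      assume "i \<noteq> 0"
      then have "h 0 + 2 \<le> h i" using incr_le2[OF h, of 0 i] i by simp
      then show False using h0 i xj by auto
    qed
    have "h 0 = j + 2" using h0 i i0 xj by auto
    moreover have "j + 3 \<le> h' 0" using h'0 i by auto
    ultimately have "min (h 0) (h' 0) = x" using xj i0 i by auto
    then show ?thesis using i(1) i0 PS_mem by blast
  next
    assume "x \<in> PS h' r"
    then obtain l where l: "l < r" "x = h' l \<or> x = Suc (h' l)" using PS_mem by blast
    consider "i = l" | "l < i" | "i < l" by linarith
    then show ?thesis
    proof cases
      case 1
      then have "x = min (h i) (h' i) \<or> x = Suc (min (h i) (h' i))" using i l by auto
      then show ?thesis using i(1) PS_mem by blast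
    next
      case 2
      have "h' l + 2 \<le> h' i" using incr_le2[OF h' 2 i(1)] .
      then have "min (h i) (h' i) = h i" using i l by auto
      then show ?thesis using i PS_mem by (metis (no_types, lifting))
    next
      case 3
      have "h i + 2 \<le> h l" using incr_le2[OF h 3 l(1)] .
      then have "min (h l) (h' l) = h' l" using i l by auto
      then show ?thesis using l PS_mem by (metis (no_types, lifting))
    qed
  qed
qed




definition run :: "(nat \<Rightarrow> nat) \<Rightarrow> nat \<Rightarrow> nat \<Rightarrow> bool" where
  "run c p l \<longleftrightarrow> p \<le> l \<and> (\<forall>q. p \<le> q \<and> q < l \<longrightarrow> c (Suc q) = c q + 2)"

definition bsh :: "(nat \<Rightarrow> nat) \<Rightarrow> nat \<Rightarrow> nat \<Rightarrow> nat" where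
  "bsh c p l = (if run c p l then Suc (c l) else c l)"

lemma run_prev: "run c p (Suc l) \<Longrightarrow> p \<le> l \<Longrightarrow> run c p l \<and> c (Suc l) = c l + 2"
  unfolding run_def by auto

lemma run_next: "run c p l \<Longrightarrow> c (Suc l) = c l + 2 \<Longrightarrow> run c p (Suc l)"
  unfolding run_def using less_Suc_eq by auto

lemma bsh_incr: assumes "incr r c" shows "incr r (bsh c p)"
  unfolding incr_def
proof (intro allI impI)
  fix l assume l: "l + 1 < r"
  have step: "c l + 2 \<le> c (Suc l)" using assms l unfolding incr_def by auto
  show "bsh c p l + 2 \<le> bsh c p (l + 1)"
  proof (cases "run c p (Suc l)")
    case True
    show ?thesis
    proof (cases "p \<le> l")
      case True
      then have "run c p l" using run_prev \<open>run c p (Suc l)\<close> by blast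
      then show ?thesis using \<open>run c p (Suc l)\<close> step by (simp add: bsh_def)
    next
      case False
      then have "\<not> run c p l" by (simp add: run_def)
      then show ?thesis using \<open>run c p (Suc l)\<close> step by (simp add: bsh_def)
    qed
  next
    case False
    show ?thesis
    proof (cases "run c p l")
      case True
      then have "c (Suc l) \<noteq> c l + 2" using False run_next by blast
      then show ?thesis using True False step by (simp add: bsh_def)
    next
      case False
      then show ?thesis using \<open>\<not> run c p (Suc l)\<close> step by (simp add: bsh_def)
    qed
  qed
qed

lemma bsh_bounds: "c l \<le> bsh c p l \<and> bsh c p l \<le> Suc (c l)"
  by (simp add: bsh_def)

lemma bsh_p: "bsh c p p = Suc (c p)"
  by (simp add: bsh_def run_def)

lemma bsh_cover: assumes "x \<in> PS c r" "x \<noteq> c p" shows "x \<in> PS (bsh c p) r"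
proof -
  obtain l where l: "l < r" "x = c l \<or> x = Suc (c l)" using assms(1) PS_mem by blast
  show ?thesis
  proof (cases "run c p l")
    case False
    then have "bsh c p l = c l" by (simp add: bsh_def)
    then show ?thesis using l PS_mem by (metis (no_types, lifting))
  next
    case True
    then have b: "bsh c p l = Suc (c l)" by (simp add: bsh_def)
    show ?thesis
    proof (cases "x = Suc (c l)")
      case True then show ?thesis using b l PS_mem by (metis (no_types, lifting))
    next
      case False
      then have xl: "x = c l" using l by blast
      then have "l \<noteq> p" using assms(2) by blast
      then have "p < l" using True by (simp add: run_def)
      then obtain l' where l': "l = Suc l'" "p \<le> l'" by (cases l) auto
      have "run c p l' \<and> c l = c l' + 2" using run_prev True l' by blast
      then have "bsh c p l' = Suc (c l')" "x = Suc (bsh c p l')" using xl by (auto simp: bsh_def)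
      moreover have "l' < r" using l l' by simp
      ultimately show ?thesis using PS_mem by blast
    qed
  qed
qed

lemma part1:
  assumes S: "S \<subseteq> pairfam (Suc r) 1 n" and T: "T \<subseteq> pairfam (Suc r) 1 n" and j: "1 \<le> j"
    and H: "H \<in> YY r n S j" and HT: "H \<notin> XX (Suc r) n T j"
  shows "H \<in> XX (Suc r) n S j \<and> (\<exists>H''\<in>XX (Suc r) n S (Suc j) - XX (Suc r) n T (Suc j). H \<union> {j+1} \<subseteq> H'' \<union> {Suc j..Suc j+1})"
proof -
  obtain M where M: "H \<in> pairfam r (j+2) n" "M \<in> XX (Suc r) n S (Suc j)" "le_p H M"
    using H by (auto simp: YY_def)
  have a: "H \<in> XX (Suc r) n S j" using XX_down[OF S j _ M(1) M(2) M(3)] by simp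
  obtain h where h: "H = PS h r" "vld r (j+2) n h" using pf_obtain[OF M(1)] by blast
  obtain h' where h': "M = PS h' r" "vld r (Suc j+2) n h'" using pf_obtain[OF XX_pf[OF M(2)]] by blast
  have ih: "incr r h" and ih': "incr r h'" using h h' vld_incr by auto
  have le: "\<forall>l<r. h l \<le> h' l" using le_PS[OF ih ih'] M(3) h h' by simp
  define h'' where "h'' = (\<lambda>l. max (h l) (j + 3 + 2 * l))"
  have lb': "\<forall>l<r. j + 3 + 2 * l \<le> h' l"
  proof (intro allI impI)
    fix l assume "l < r"
    then show "j + 3 + 2 * l \<le> h' l" using incr_lb[OF ih', of l] h'(2) by (auto simp: vld_def)
  qed
  have lb: "\<forall>l<r. j + 2 + 2 * l \<le> h l"
  proof (intro allI impI)
    fix l assume "l < r"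
    then show "j + 2 + 2 * l \<le> h l" using incr_lb[OF ih, of l] h(2) by (auto simp: vld_def)
  qed
  have b1: "\<forall>l<r. h l \<le> h'' l \<and> h'' l \<le> h' l" using le lb' by (auto simp: h''_def)
  have ih'': "incr r h''" using ih unfolding incr_def h''_def by fastforce
  have v'': "vld r (Suc j + 2) n h''"
  proof -
    have "0 < r \<Longrightarrow> h'' (r - 1) + 1 \<le> n"
      using b1 incr_ub[OF h'(2)] by (metis diff_less le_trans less_numeral_extra(1) add_le_mono1)
    then show ?thesis using ih'' by (auto simp: vld_def h''_def)
  qed
  have H''pf: "PS h'' r \<in> pairfam r (Suc j + 2) n" using pf_intro[OF v''] .
  have leM: "le_p (PS h'' r) M" using le_PS[OF ih'' ih'] b1 h' by simp
  have inS: "PS h'' r \<in> XX (Suc r) n S (Suc j)" using XX_down[OF S _ order_refl H''pf M(2) leM] by simp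
  have leH: "le_p H (PS h'' r)" using le_PS[OF ih ih''] b1 h by simp
  have notT: "PS h'' r \<notin> XX (Suc r) n T (Suc j)"
  proof
    assume A: "PS h'' r \<in> XX (Suc r) n T (Suc j)"
    have "H \<in> XX (Suc r) n T j" using XX_down[OF T j _ M(1) A leH] by simp
    then show False using HT by simp
  qed
  have cov: "H \<union> {j+1} \<subseteq> PS h'' r \<union> {Suc j..Suc j+1}"
  proof
    fix x assume "x \<in> H \<union> {j+1}"
    then consider "x = j + 1" | "x \<in> H" by blast
    then show "x \<in> PS h'' r \<union> {Suc j..Suc j+1}"
    proof cases
      case 1 then show ?thesis by simp
    next
      case 2
      then obtain l where l: "l < r" "x = h l \<or> x = Suc (h l)" using h(1) PS_mem by blast
      show ?thesis
      proof (cases "j + 3 + 2 * l \<le> h l")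
        case True
        then have "h'' l = h l" by (simp add: h''_def)
        then show ?thesis using l PS_mem by (metis (no_types, lifting) UnI1)
      next
        case False
        then have hl: "h l = j + 2 + 2 * l" using lb l by force
        have hl'': "h'' l = j + 3 + 2 * l" using False by (simp add: h''_def)
        show ?thesis
        proof (cases "x = Suc (h l)")
          case True
          then have "x = h'' l" using hl hl'' by simp
          then show ?thesis using l PS_mem by blast
        next
          case False
          then have xh: "x = h l" using l by blast
          show ?thesis
          proof (cases l)
            case 0 then show ?thesis using xh hl by simp
          next
            case (Suc l')
            have "h l' + 2 \<le> h l" using ih l Suc unfolding incr_def by auto
            moreover have "j + 2 + 2 * l' \<le> h l'" using lb l Suc by simp
            ultimately have "h l' = j + 2 + 2 * l'" using hl Suc by simp
            then have "h'' l' = j + 3 + 2 * l'" by (simp add: h''_def)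
            then have "x = Suc (h'' l')" using xh hl Suc by simp
            moreover have "l' < r" using l Suc by simp
            ultimately show ?thesis using PS_mem by blast
          qed
        qed
      qed
    qed
  qed
  show ?thesis using a inS notT cov by blast
qed




lemma core2:
  assumes S: "S \<subseteq> pairfam (Suc r) 1 n" and T: "T \<subseteq> pairfam (Suc r) 1 n" and P: "prec_fam T S"
    and j: "1 \<le> j"
    and H: "H \<in> XX (Suc r) n S j" and HT: "H \<notin> XX (Suc r) n T j"
    and H': "H' \<in> XX (Suc r) n S (Suc j)"
    and t1: "\<tau> \<subseteq> H" and t2: "\<tau> \<subseteq> insert (j+2) H'"
  shows "\<exists>H0\<in>YY r n S j - XX (Suc r) n T j. \<tau> \<subseteq> H0"
proof -
  let ?Z = "{H0 \<in> YY r n S j. \<tau> \<subseteq> H0}"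
  have Hpf: "H \<in> pairfam r (j+2) n" using XX_pf[OF H] .
  obtain h where h: "H = PS h r" "vld r (j+2) n h" using pf_obtain[OF Hpf] by blast
  obtain h' where h': "H' = PS h' r" "vld r (Suc j+2) n h'" using pf_obtain[OF XX_pf[OF H']] by blast
  have ih: "incr r h" and ih': "incr r h'" using h h' vld_incr by auto
  define m where "m = (\<lambda>l. min (h l) (h' l))"
  have im: "incr r m" using ih ih' unfolding incr_def m_def by fastforce
  have vm: "vld r (j+2) n m"
  proof -
    have "0 < r \<Longrightarrow> m (r - 1) + 1 \<le> n" using h(2) unfolding vld_def m_def by auto
    moreover have "0 < r \<Longrightarrow> j + 2 \<le> m 0" using h(2) h'(2) unfolding vld_def m_def by auto
    ultimately show ?thesis using im by (simp add: vld_def)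
  qed
  have mle: "le_p (PS m r) H'" using le_PS[OF im ih'] h'(1) by (simp add: m_def)
  have mY: "PS m r \<in> YY r n S j" unfolding YY_def using pf_intro[OF vm] H' mle by blast
  have mt: "\<tau> \<subseteq> PS m r" unfolding m_def
    by (rule min_cover[OF ih ih' _ _ _ _]) (use h h' t1 t2 in \<open>auto simp: vld_def\<close>)
  have Zne: "PS m r \<in> ?Z" using mY mt by blast
  have Zsub: "?Z \<subseteq> pairfam r (j+2) n" unfolding YY_def by blast
  have Zf: "finite ?Z" using finite_subset[OF Zsub pf_finite_fam] .
  have Zf2: "\<forall>G\<in>?Z. finite G" using Zsub pf_card by blast
  obtain H0 where H0: "H0 \<in> maximals_p ?Z" using exists_maximal[OF Zf Zf2 Zne] by blast
  have H0Z: "H0 \<in> ?Z" and H0max: "\<forall>H''\<in>?Z. le_p H0 H'' \<longrightarrow> H'' = H0"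
    using H0 unfolding maximals_p_def by auto
  have notT: "H0 \<notin> XX (Suc r) n T j"
  proof
    assume H0T: "H0 \<in> XX (Suc r) n T j"
    have H0pf: "H0 \<in> pairfam r (j+2) n" using H0Z unfolding YY_def by blast
    obtain c where c: "H0 = PS c r" "vld r (j+2) n c" using pf_obtain[OF H0pf] by blast
    have ic: "incr r c" using c vld_incr by auto
    have sh: "PS (\<lambda>l. c l + 1) r \<in> XX (Suc r) n S (Suc j) \<and> vld r (Suc j + 2) n (\<lambda>l. c l + 1)"
      using shift_T[OF S T P j c(2)] H0T c(1) by simp
    have ish: "incr r (\<lambda>l. c l + 1)" using sh vld_incr by blast
    show False
    proof (cases "\<forall>p<r. c p \<in> \<tau>")
      case True
      then have "\<forall>p<r. c p \<in> PS h r" using t1 h(1) by blast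
      then have "\<forall>p<r. h p \<le> c p" using caseA[OF ih ic] by blast
      then have "le_p H H0" using le_PS[OF ih ic] h(1) c(1) by simp
      then have "H \<in> XX (Suc r) n T j" using XX_down[OF T j order_refl Hpf H0T] by simp
      then show False using HT by simp
    next
      case False
      then obtain p where p: "p < r" "c p \<notin> \<tau>" by blast
      let ?c' = "bsh c p"
      have ic': "incr r ?c'" using bsh_incr[OF ic] .
      have v': "vld r (j+2) n ?c'"
      proof -
        have "0 < r \<Longrightarrow> ?c' (r - 1) + 1 \<le> n"
        proof -
          assume "0 < r"
          then have "c (r - 1) + 1 + 1 \<le> n" using sh unfolding vld_def by simp
          then show ?thesis using bsh_bounds[of c "r - 1" p] by simp
        qed
        moreover have "0 < r \<Longrightarrow> j + 2 \<le> ?c' 0" using c(2) bsh_bounds[of c 0 p] unfolding vld_def by force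
        ultimately show ?thesis using ic' by (simp add: vld_def)
      qed
      have le1: "le_p (PS ?c' r) (PS (\<lambda>l. c l + 1) r)" using le_PS[OF ic' ish] bsh_bounds by simp
      have Y': "PS ?c' r \<in> YY r n S j" unfolding YY_def using pf_intro[OF v'] sh le1 by blast
      have t': "\<tau> \<subseteq> PS ?c' r"
      proof
        fix x assume x: "x \<in> \<tau>"
        then have "x \<in> PS c r" "x \<noteq> c p" using H0Z c(1) p(2) by auto
        then show "x \<in> PS ?c' r" using bsh_cover by blast
      qed
      have le2: "le_p H0 (PS ?c' r)" using le_PS[OF ic ic'] bsh_bounds c(1) by simp
      have "PS ?c' r = H0" using H0max Y' t' le2 by blast
      then have "?c' p = c p" using PS_inj[OF ic' ic _ p(1)] c(1) by simp
      then show False using bsh_p[of c p] by simp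
    qed
  qed
  show ?thesis using H0Z notT by blast
qed

theorem lemma3p10:
  fixes k n j :: nat and S T :: "nat set set"
  assumes "k \<ge> 1" and "n \<ge> 2 * k"
    and "antichain_in S (pairfam k 1 n)" and "antichain_in T (pairfam k 1 n)"
    and "prec_fam T S" and "j \<ge> 1"
    and "Dcx k n S T (j + 1) \<noteq> {}"
  shows "Dcx k n S T j \<inter> Dcx k n S T (j + 1) =
     cjoin (cdiff (Bcx (k - 1) n (SJ k n S 1 (j + 1)) (j + 2))
                  (Bcx (k - 1) n (SJ k n T 1 j) (j + 2)))
           (simplex {j + 1})"
proof -
  obtain r where k: "k = Suc r" using assms(1) by (cases k) auto
  have S: "S \<subseteq> pairfam (Suc r) 1 n" using assms(3) k by (simp add: antichain_in_def)
  have T: "T \<subseteq> pairfam (Suc r) 1 n" using assms(4) k by (simp add: antichain_in_def)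
  have j: "1 \<le> j" using assms(6) .
  have j1: "1 \<le> Suc j" by simp
  let ?A = "(\<lambda>H. H \<union> {j..j+1}) ` (XX (Suc r) n S j - XX (Suc r) n T j)"
  let ?B = "(\<lambda>H. H \<union> {Suc j..Suc j+1}) ` (XX (Suc r) n S (Suc j) - XX (Suc r) n T (Suc j))"
  let ?C = "(\<lambda>H. H \<union> {j+1}) ` (YY r n S j - XX (Suc r) n T j)"
  have DA: "Dcx k n S T j = gen_cx ?A" using Dcx_eq[OF S T j] k by simp
  have DB: "Dcx k n S T (j + 1) = gen_cx ?B" using Dcx_eq[OF S T j1] k by simp
  have RC: "cjoin (cdiff (Bcx (k - 1) n (SJ k n S 1 (j + 1)) (j + 2))
                  (Bcx (k - 1) n (SJ k n T 1 j) (j + 2))) (simplex {j + 1}) = gen_cx ?C"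
    using RHS_eq[OF T j, of S] k by simp
  have "gen_cx ?A \<inter> gen_cx ?B = gen_cx ?C"
  proof (rule inter_gen)
    show "\<forall>c\<in>?C. (\<exists>a\<in>?A. c \<subseteq> a) \<and> (\<exists>b\<in>?B. c \<subseteq> b)"
    proof
      fix c assume "c \<in> ?C"
      then obtain H where H: "H \<in> YY r n S j" "H \<notin> XX (Suc r) n T j" "c = H \<union> {j+1}" by blast
      from part1[OF S T j H(1,2)] obtain H'' where
        a: "H \<in> XX (Suc r) n S j" and H'': "H'' \<in> XX (Suc r) n S (Suc j) - XX (Suc r) n T (Suc j)"
        "H \<union> {j+1} \<subseteq> H'' \<union> {Suc j..Suc j+1}" by blast
      have "H \<union> {j..j+1} \<in> ?A" using a H(2) by blast
      moreover have "c \<subseteq> H \<union> {j..j+1}" using H(3) by auto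
      moreover have "H'' \<union> {Suc j..Suc j+1} \<in> ?B" using H''(1) by blast
      ultimately show "(\<exists>a\<in>?A. c \<subseteq> a) \<and> (\<exists>b\<in>?B. c \<subseteq> b)" using H(3) H''(2) by blast
    qed
  next
    fix \<sigma> a b assume a: "a \<in> ?A" and b: "b \<in> ?B" and sa: "\<sigma> \<subseteq> a" and sb: "\<sigma> \<subseteq> b"
    obtain H where H: "H \<in> XX (Suc r) n S j" "H \<notin> XX (Suc r) n T j" "a = H \<union> {j..j+1}" using a by blast
    obtain H' where H': "H' \<in> XX (Suc r) n S (Suc j)" "b = H' \<union> {Suc j..Suc j+1}" using b by blast
    have H'sub: "H' \<subseteq> {Suc j + 2..n}" using pf_sub[OF XX_pf[OF H'(1)]] .
    let ?\<tau> = "\<sigma> - {j+1}"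
    have jn: "j \<notin> \<sigma>"
    proof
      assume "j \<in> \<sigma>"
      then have "j \<in> H' \<union> {Suc j..Suc j+1}" using sb H'(2) by blast
      then have "j \<in> H'" by auto
      then have "j \<in> {Suc j + 2..n}" using H'sub by blast
      then show False by simp
    qed
    have t1: "?\<tau> \<subseteq> H"
    proof
      fix x assume x: "x \<in> ?\<tau>"
      then have "x \<in> H \<union> {j..j+1}" using sa H(3) by blast
      moreover have "x \<noteq> j" using x jn by blast
      moreover have "x \<noteq> j + 1" using x by blast
      ultimately show "x \<in> H" by (simp, linarith)
    qed
    have t2: "?\<tau> \<subseteq> insert (j+2) H'" using sb H'(2) by auto
    obtain H0 where H0: "H0 \<in> YY r n S j - XX (Suc r) n T j" "?\<tau> \<subseteq> H0"
      using core2[OF S T assms(5) j H(1,2) H'(1) t1 t2] by blast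
    have "H0 \<union> {j+1} \<in> ?C" using H0(1) by blast
    moreover have "\<sigma> \<subseteq> H0 \<union> {j+1}" using H0(2) by blast
    ultimately show "\<exists>c\<in>?C. \<sigma> \<subseteq> c" by blast
  qed
  then show ?thesis using DA DB RC by simp
qed


end
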